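(* Let $\mathcal{H}$ be an infinite dimensional complex Hilbert space and let $\phi:\mathcal{B}(\mathcal{H})\to\mathcal{B}(\mathcal{H})$ be a bijective map preserving the Douglas solution in both directions. Then for every $B\in\mathcal{B}(\mathcal{H})$: $\ker B=\{0\}$ if and only if $\ker\phi(B)=\{0\}$.
   Context: $\mathcal{B}(\mathcal{H})$ denotes the algebra of all bounded linear operators on $\mathcal{H}$. For $A,B\in\mathcal{B}(\mathcal{H})$ with $\operatorname{ran}A\subseteq\operatorname{ran}B$, the Douglas solution of $A=BX$ is the unique $D\in\mathcal{B}(\mathcal{H})$ with $BD=A$ and $\operatorname{ran}D\subseteq(\ker B)^\perp$. A map $\phi:\mathcal{B}(\mathcal{H})\to\mathcal{B}(\mathcal{H})$ preserves the Douglas solution in both directions if for all $A,B,X\in\mathcal{B}(\mathcal{H})$: $X$ is the Douglas solution of $A=BX$ if and only if $\phi(X)$ is the Douglas solution of $\phi(A)=\phi(B)Y$. *)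

theory Defs
  imports "HOL-Analysis.Analysis"
begin

text \<open>A complex Hilbert space is encoded as a real Hilbert space (type class
  real_inner + complete_space) together with a complex structure J: a bounded
  real-linear map with J (J x) = - x which is orthogonal.  Scalar multiplication by
  the imaginary unit i is x \<mapsto> J x.\<close>

definition complex_structure :: "('a::{real_inner,complete_space} \<Rightarrow>\<^sub>L 'a) \<Rightarrow> bool" where
  "complex_structure J \<longleftrightarrow>
     (\<forall>x. blinfun_apply J (blinfun_apply J x) = - x) \<and> (\<forall>x y. inner (blinfun_apply J x) (blinfun_apply J y) = inner x y)"

definition cinner :: "('a::{real_inner,complete_space} \<Rightarrow>\<^sub>L 'a) \<Rightarrow> 'a \<Rightarrow> 'a \<Rightarrow> complex" where
  "cinner J x y = Complex (inner x y) (inner (blinfun_apply J x) y)"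

definition cspan :: "('a::{real_inner,complete_space} \<Rightarrow>\<^sub>L 'a) \<Rightarrow> 'a set \<Rightarrow> 'a set" where
  "cspan J S = span (S \<union> blinfun_apply J ` S)"

definition infinite_dimensional :: "('a::{real_inner,complete_space} \<Rightarrow>\<^sub>L 'a) \<Rightarrow> bool" where
  "infinite_dimensional J \<longleftrightarrow> \<not> (\<exists>S. finite S \<and> cspan J S = UNIV)"

text \<open>B(H): bounded complex-linear operators = bounded real-linear ones commuting with J.\<close>
definition BH :: "('a::{real_inner,complete_space} \<Rightarrow>\<^sub>L 'a) \<Rightarrow> ('a \<Rightarrow>\<^sub>L 'a) set" where
  "BH J = {T. \<forall>x. blinfun_apply T (blinfun_apply J x) = blinfun_apply J (blinfun_apply T x)}"

definition ker_op :: "('a::real_normed_vector \<Rightarrow>\<^sub>L 'a) \<Rightarrow> 'a set" where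
  "ker_op T = {x. blinfun_apply T x = 0}"

definition ran_op :: "('a::real_normed_vector \<Rightarrow>\<^sub>L 'a) \<Rightarrow> 'a set" where
  "ran_op T = range (blinfun_apply T)"

definition corth :: "('a::{real_inner,complete_space} \<Rightarrow>\<^sub>L 'a) \<Rightarrow> 'a set \<Rightarrow> 'a set" where
  "corth J M = {y. \<forall>x\<in>M. cinner J x y = 0}"

definition douglas_solution ::
  "('a::{real_inner,complete_space} \<Rightarrow>\<^sub>L 'a) \<Rightarrow> ('a \<Rightarrow>\<^sub>L 'a) \<Rightarrow> ('a \<Rightarrow>\<^sub>L 'a) \<Rightarrow> ('a \<Rightarrow>\<^sub>L 'a) \<Rightarrow> bool"
  where
  "douglas_solution J A B X \<longleftrightarrow>
     ran_op A \<subseteq> ran_op B \<and> B o\<^sub>L X = A \<and> ran_op X \<subseteq> corth J (ker_op B)"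

end

theory Submission
  imports Defs
begin

lemma inj_char:
  fixes J :: "'a::{real_inner,complete_space} \<Rightarrow>\<^sub>L 'a"
  assumes B: "B \<in> BH J"
  shows "ker_op B = {0} \<longleftrightarrow> (\<forall>X\<in>BH J. \<exists>A\<in>BH J. douglas_solution J A B X)"
proof
  assume k: "ker_op B = {0}"
  have c: "corth J (ker_op B) = UNIV"
    unfolding k corth_def cinner_def by (simp add: complex_eq_iff)
  show "\<forall>X\<in>BH J. \<exists>A\<in>BH J. douglas_solution J A B X"
  proof
    fix X assume X: "X \<in> BH J"
    have "B o\<^sub>L X \<in> BH J" using B X unfolding BH_def by simp
    moreover have "douglas_solution J (B o\<^sub>L X) B X"
      unfolding douglas_solution_def c ran_op_def by auto
    ultimately show "\<exists>A\<in>BH J. douglas_solution J A B X" by blast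
  qed
next
  assume h: "\<forall>X\<in>BH J. \<exists>A\<in>BH J. douglas_solution J A B X"
  have "id_blinfun \<in> BH J" unfolding BH_def by simp
  then obtain A where "douglas_solution J A B id_blinfun" using h by blast
  hence sub: "UNIV \<subseteq> corth J (ker_op B)"
    unfolding douglas_solution_def ran_op_def by simp
  show "ker_op B = {0}"
  proof
    show "ker_op B \<subseteq> {0}"
    proof
      fix x assume x: "x \<in> ker_op B"
      have "x \<in> corth J (ker_op B)" using sub by auto
      hence "cinner J x x = 0" using x unfolding corth_def by blast
      hence "inner x x = 0" unfolding cinner_def by (simp add: complex_eq_iff)
      thus "x \<in> {0}" by simp
    qed
    show "{0} \<subseteq> ker_op B" unfolding ker_op_def by simp
  qed
qed

theorem claim2:
  fixes J :: "'a::{real_inner,complete_space} \<Rightarrow>\<^sub>L 'a"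
    and \<phi> :: "('a \<Rightarrow>\<^sub>L 'a) \<Rightarrow> ('a \<Rightarrow>\<^sub>L 'a)"
  assumes "complex_structure J"
    and "infinite_dimensional J"
    and "bij_betw \<phi> (BH J) (BH J)"
    and "\<forall>A\<in>BH J. \<forall>B\<in>BH J. \<forall>X\<in>BH J.
           douglas_solution J A B X \<longleftrightarrow> douglas_solution J (\<phi> A) (\<phi> B) (\<phi> X)"
  shows "\<forall>B\<in>BH J. ker_op B = {0} \<longleftrightarrow> ker_op (\<phi> B) = {0}"
proof
  fix B assume B: "B \<in> BH J"
  have im: "\<phi> ` BH J = BH J" using assms(3) by (simp add: bij_betw_def)
  have pB: "\<phi> B \<in> BH J" using B im by blast
  have "ker_op B = {0} \<longleftrightarrow> (\<forall>X\<in>BH J. \<exists>A\<in>BH J. douglas_solution J A B X)"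
    using inj_char[OF B] .
  also have "\<dots> \<longleftrightarrow> (\<forall>X\<in>BH J. \<exists>A\<in>BH J. douglas_solution J (\<phi> A) (\<phi> B) (\<phi> X))"
    using assms(4) B by blast
  also have "\<dots> \<longleftrightarrow> (\<forall>Y\<in>\<phi> ` BH J. \<exists>A'\<in>\<phi> ` BH J. douglas_solution J A' (\<phi> B) Y)"
    by blast
  also have "\<dots> \<longleftrightarrow> (\<forall>Y\<in>BH J. \<exists>A'\<in>BH J. douglas_solution J A' (\<phi> B) Y)"
    by (simp only: im)
  also have "\<dots> \<longleftrightarrow> ker_op (\<phi> B) = {0}"
    using inj_char[OF pB] by simp
  finally show "ker_op B = {0} \<longleftrightarrow> ker_op (\<phi> B) = {0}" .
qed

end
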